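(* Let $d\in\mathbb{N}$ and let $\mathcal{P}$ be a partition of $\mathbb{R}^{d}$. Suppose there exists $D\in(0,\infty)$ that is a strict pairwise bound for every $X\in\mathcal{P}$, and there exists $\epsilon\in(0,\infty)$ such that $|\mathcal{N}_{\epsilon}(\vec{q})|\leq d+1$ for all $\vec{q}\in\mathbb{R}^{d}$. Then there exists $\vec{p}\in\mathbb{R}^{d}$ such that $|\mathcal{N}_{\epsilon}(\vec{p})|=d+1$. Furthermore, $\mathcal{P}$ contains a $(d+1)$-clique.
   Context: On $\mathbb{R}^d$ use $d_{max}(\vec{x},\vec{y})=\max_i|x_i-y_i|$; $D$ is a strict pairwise bound for $X$ if $d_{max}(\vec{x},\vec{y})<D$ for all $\vec{x},\vec{y}\in X$; $\overline{B}_{\epsilon}(\vec{p})=\{\vec{x}:d_{max}(\vec{x},\vec{p})\le\epsilon\}$; $\mathcal{N}_{\epsilon}(\vec{p})=\{X\in\mathcal{P}: X\cap\overline{B}_{\epsilon}(\vec{p})\neq\emptyset\}$. Members $X,Y$ are adjacent if $\overline{X}\cap\overline{Y}\ne\emptyset$; an $n$-clique is a set of $n$ distinct pairwise adjacent members. *)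

theory Defs
  imports "HOL-Analysis.Analysis"
begin

text \<open>Max-metric on R^d, modelled as real^'n with d = CARD('n).\<close>
definition dmax :: "real^'n \<Rightarrow> real^'n \<Rightarrow> real" where
  "dmax x y = Max (range (\<lambda>i. \<bar>x$i - y$i\<bar>))"

definition is_partition :: "'a set set \<Rightarrow> bool" where
  "is_partition P \<longleftrightarrow> (\<forall>X\<in>P. X \<noteq> {}) \<and>
     (\<forall>X\<in>P. \<forall>Y\<in>P. X \<noteq> Y \<longrightarrow> X \<inter> Y = {}) \<and> \<Union>P = UNIV"

definition strict_pairwise_bound :: "real \<Rightarrow> (real^'n) set \<Rightarrow> bool" where
  "strict_pairwise_bound D X \<longleftrightarrow> (\<forall>x\<in>X. \<forall>y\<in>X. dmax x y < D)"

definition cball_max :: "real \<Rightarrow> real^'n \<Rightarrow> (real^'n) set" where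
  "cball_max e p = {x. dmax x p \<le> e}"

definition nbhd :: "(real^'n) set set \<Rightarrow> real \<Rightarrow> real^'n \<Rightarrow> (real^'n) set set" where
  "nbhd P e p = {X\<in>P. X \<inter> cball_max e p \<noteq> {}}"

definition adjacent :: "(real^'n) set \<Rightarrow> (real^'n) set \<Rightarrow> bool" where
  "adjacent X Y \<longleftrightarrow> closure X \<inter> closure Y \<noteq> {}"

definition has_clique :: "(real^'n) set set \<Rightarrow> nat \<Rightarrow> bool" where
  "has_clique P n \<longleftrightarrow> (\<exists>C\<subseteq>P. finite C \<and> card C = n \<and>
      (\<forall>X\<in>C. \<forall>Y\<in>C. adjacent X Y))"

end

theory Submission
  imports Defs "HOL-Library.Cardinality"
begin

lemma sum_option_split:
  fixes h :: "'n::finite option \<Rightarrow> real"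
  shows "sum h UNIV = h None + (\<Sum>i\<in>UNIV. h (Some i))"
proof -
  have "(UNIV :: 'n option set) = insert None (range Some)" by (simp add: UNIV_option_conv)
  then have "sum h UNIV = sum h (insert None (range Some))" by simp
  also have "\<dots> = h None + sum h (range Some)" by (subst sum.insert) auto
  also have "sum h (range Some) = (\<Sum>i\<in>UNIV. h (Some i))" by (subst sum.reindex) auto
  finally show ?thesis .
qed

lemma kkm_like:
  fixes g :: "'n::finite option \<Rightarrow> real^'n \<Rightarrow> real" and L :: real
  assumes L: "L > 0"
    and cont: "\<And>k. continuous_on UNIV (g k)"
    and nonneg: "\<And>k x. g k x \<ge> 0"
    and cover: "\<And>x. (\<exists>i. x$i > 0 \<and> g (Some i) x = 0) \<or> ((\<Sum>i\<in>UNIV. x$i) < L \<and> g None x = 0)"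
  shows "\<exists>x. \<forall>k. g k x = 0"
proof (rule ccontr)
  assume "\<not> ?thesis"
  then have nz: "\<And>x. \<exists>k. g k x \<noteq> 0" by blast
  define S where "S x = (\<Sum>k\<in>UNIV. g k x)" for x
  have Spos: "S x > 0" for x
  proof -
    obtain k where "g k x \<noteq> 0" using nz by blast
    then have "g k x > 0" using nonneg[of k x] by simp
    moreover have "g k x \<le> S x" unfolding S_def
      by (rule member_le_sum) (auto simp: nonneg)
    ultimately show ?thesis by simp
  qed
  define f where "f x = (\<chi> i. L * g (Some i) x / S x)" for x
  define T where "T = {x::real^'n. \<forall>i. 0 \<le> x$i} \<inter> {x. (\<Sum>i\<in>UNIV. x$i) \<le> L}"
  have contS: "continuous_on UNIV S" unfolding S_def
    by (intro continuous_intros cont)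
  have contf: "continuous_on T f" unfolding f_def
    apply (rule continuous_on_subset[of UNIV])
     apply (rule continuous_on_vec_lambda)
     apply (intro continuous_intros cont contS)
    using Spos apply (metis less_irrefl)
    by simp
  have closedT: "closed T" unfolding T_def
    apply (intro closed_Int)
     apply (simp only: Collect_all_eq)
     apply (intro closed_INT ballI allI)
     apply (rule closed_Collect_le, intro continuous_intros, intro continuous_intros)
    apply (rule closed_Collect_le, intro continuous_intros, intro continuous_intros)
    done
  have bT: "T \<subseteq> cbox 0 (\<chi> i. L)"
  proof
    fix x assume x: "x \<in> T"
    have "x$i \<le> L" for i
    proof -
      have "x$i \<le> (\<Sum>j\<in>UNIV. x$j)"
        by (rule member_le_sum) (use x in \<open>auto simp: T_def\<close>)
      then show ?thesis using x by (auto simp: T_def)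
    qed
    then show "x \<in> cbox 0 (\<chi> i. L)" using x by (auto simp: T_def mem_box_cart)
  qed
  have compT: "compact T"
    using closedT bT by (metis bounded_cbox bounded_subset bounded_closed_imp_seq_compact compact_eq_seq_compact_metric)
  have convT: "convex T" unfolding T_def
    by (intro convex_Int) (auto simp: convex_def sum.distrib sum_distrib_left[symmetric]
        intro!: add_nonneg_nonneg mult_nonneg_nonneg convex_bound_le)
  have neT: "T \<noteq> {}"
  proof -
    have "0 \<in> T" using L by (auto simp: T_def)
    then show ?thesis by blast
  qed
  have sumf: "(\<Sum>i\<in>UNIV. f x $ i) = L * (S x - g None x) / S x" for x
  proof -
    have "(\<Sum>i\<in>UNIV. f x $ i) = (\<Sum>i\<in>UNIV. L * g (Some i) x / S x)" by (simp add: f_def)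
    also have "\<dots> = L * (\<Sum>i\<in>UNIV. g (Some i) x) / S x"
      by (simp add: sum_divide_distrib sum_distrib_left)
    also have "(\<Sum>i\<in>UNIV. g (Some i) x) = S x - g None x"
      using sum_option_split[of "\<lambda>k. g k x"] by (simp add: S_def)
    finally show ?thesis .
  qed
  have fT: "f ` T \<subseteq> T"
  proof
    fix y assume "y \<in> f ` T"
    then obtain x where y: "y = f x" by blast
    have "\<forall>i. 0 \<le> y$i" using y Spos[of x] L nonneg by (simp add: f_def)
    moreover have "(\<Sum>i\<in>UNIV. y$i) \<le> L"
    proof -
      have "L * (S x - g None x) / S x \<le> L"
        using Spos[of x] L nonneg[of None x] by (simp add: divide_simps)
      then show ?thesis using sumf[of x] y by simp
    qed
    ultimately show "y \<in> T" by (simp add: T_def)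
  qed
  obtain x where "x \<in> T" and fx: "f x = x"
    using brouwer[OF compT convT neT contf] fT by (metis image_subset_iff_funcset)
  from cover[of x] show False
  proof
    assume "\<exists>i. x$i > 0 \<and> g (Some i) x = 0"
    then obtain i where "x$i > 0" "g (Some i) x = 0" by blast
    moreover have "x$i = L * g (Some i) x / S x" using fx by (metis f_def vec_lambda_beta)
    ultimately show False by simp
  next
    assume a: "(\<Sum>i\<in>UNIV. x$i) < L \<and> g None x = 0"
    have "(\<Sum>i\<in>UNIV. x$i) = L" using sumf[of x] fx a Spos[of x] by simp
    then show False using a by simp
  qed
qed


lemma dmax_ge: "\<bar>x$i - y$i\<bar> \<le> dmax x y"
  unfolding dmax_def by (rule Max_ge) auto

lemma dist_le_dmax: "dist x y \<le> real CARD('n) * dmax x (y::real^'n)"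
proof -
  have "dist x y = norm (x - y)" by (simp add: dist_norm)
  also have "\<dots> \<le> (\<Sum>i\<in>UNIV. \<bar>(x - y)$i\<bar>)" by (rule norm_le_l1_cart)
  also have "\<dots> \<le> (\<Sum>i\<in>(UNIV::'n set). dmax x y)"
    by (rule sum_mono) (simp add: dmax_ge)
  finally show ?thesis by simp
qed

lemma dmax_le_dist: "dmax x y \<le> dist x (y::real^'n)"
proof -
  have "\<bar>x$i - y$i\<bar> \<le> dist x y" for i
    using component_le_norm_cart[of "x - y" i] by (simp add: dist_norm)
  then show ?thesis unfolding dmax_def by (subst Max_le_iff) auto
qed

theorem mainTheorem15:
  fixes P :: "(real^'n) set set" and D e :: real
  assumes "is_partition P"
    and "D > 0" and "\<forall>X\<in>P. strict_pairwise_bound D X"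
    and "e > 0"
    and "\<forall>q. finite (nbhd P e q) \<and> card (nbhd P e q) \<le> CARD('n) + 1"
  shows "(\<exists>p. card (nbhd P e p) = CARD('n) + 1) \<and> has_clique P (CARD('n) + 1)"
proof -
  note part = assms(1) and Dpos = assms(2) and spb = assms(3) and epos = assms(4) and fin = assms(5)
  define d where "d = CARD('n)"
  have dpos: "d > 0" by (simp add: d_def)
  define L where "L = D * real d"
  have Lpos: "L > 0" using Dpos dpos by (simp add: L_def)
  define good where "good X k = (case k of Some i \<Rightarrow> (\<forall>y\<in>X. y$i > 0)
      | None \<Rightarrow> (\<forall>y\<in>X. (\<Sum>j\<in>UNIV. y$j) < L))" for X :: "(real^'n) set" and k
  have ex_good: "\<exists>k. good X k" if XP: "X \<in> P" for X
  proof (rule ccontr)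
    assume "\<not> ?thesis"
    then have n1: "\<forall>i. \<exists>y\<in>X. y$i \<le> 0" and n0: "\<exists>y\<in>X. (\<Sum>j\<in>UNIV. y$j) \<ge> L"
      by (auto simp: good_def not_less dest: spec[of _ "Some _"] spec[of _ None])
    obtain y0 where y0: "y0 \<in> X" "(\<Sum>j\<in>UNIV. y0$j) \<ge> L" using n0 by blast
    have "\<exists>i. y0$i \<ge> D"
    proof (rule ccontr)
      assume "\<not> ?thesis"
      then have "\<forall>i. y0$i < D" by (simp add: not_le)
      then have "(\<Sum>j\<in>UNIV. y0$j) < (\<Sum>j\<in>(UNIV::'n set). D)"
        by (intro sum_strict_mono) auto
      then show False using y0 by (simp add: L_def d_def mult.commute)
    qed
    then obtain i where i: "y0$i \<ge> D" by blast
    obtain y1 where y1: "y1 \<in> X" "y1$i \<le> 0" using n1 by blast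
    have "D \<le> \<bar>y0$i - y1$i\<bar>" using i y1 by simp
    also have "\<dots> \<le> dmax y0 y1" by (rule dmax_ge)
    also have "\<dots> < D" using spb XP y0 y1 by (auto simp: strict_pairwise_bound_def)
    finally show False by simp
  qed
  define c where "c X = (SOME k. good X k)" for X
  have c_good: "good X (c X)" if "X \<in> P" for X
    unfolding c_def using ex_good[OF that] by (rule someI_ex)
  define A where "A k = \<Union>{X\<in>P. c X = k}" for k
  define g where "g k x = (if A k = {} then 1 else infdist x (A k))" for k x
  have cover_all: "\<exists>X\<in>P. x \<in> X" for x using part by (auto simp: is_partition_def)
  have "\<exists>x. \<forall>k. g k x = 0"
  proof (rule kkm_like[OF Lpos])
    show "continuous_on UNIV (g k)" for k
      unfolding g_def by (cases "A k = {}") (auto intro: continuous_intros)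
    show "g k x \<ge> 0" for k x by (simp add: g_def infdist_nonneg)
    fix x
    obtain X where X: "X \<in> P" "x \<in> X" using cover_all by blast
    have xA: "x \<in> A (c X)" using X by (auto simp: A_def)
    then have g0: "g (c X) x = 0" by (auto simp: g_def infdist_zero)
    show "(\<exists>i. x$i > 0 \<and> g (Some i) x = 0) \<or> ((\<Sum>i\<in>UNIV. x$i) < L \<and> g None x = 0)"
      using c_good[OF X(1)] g0 X(2) by (cases "c X") (auto simp: good_def)
  qed
  then obtain x0 where x0: "\<And>k. g k x0 = 0" by blast
  have clA: "x0 \<in> closure (A k)" for k
  proof -
    have "A k \<noteq> {}" using x0[of k] by (auto simp: g_def split: if_splits)
    then show ?thesis using x0[of k] in_closure_iff_infdist_zero by (auto simp: g_def)
  qed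
  have nb_eq: "nbhd P \<delta> x0 = nbhd P e x0 \<and> card (nbhd P e x0) = d + 1"
    if dl: "0 < \<delta>" "\<delta> \<le> e" for \<delta>
  proof -
    have sub: "nbhd P \<delta> x0 \<subseteq> nbhd P e x0"
      using dl by (auto simp: nbhd_def cball_max_def)
    have "\<exists>X. X \<in> nbhd P \<delta> x0 \<and> c X = k" for k
    proof -
      obtain y where y: "y \<in> A k" "dist y x0 < \<delta>" using clA[of k] dl closure_approachable by blast
      then obtain X where X: "X \<in> P" "c X = k" "y \<in> X" by (auto simp: A_def)
      have "dmax y x0 \<le> \<delta>" using dmax_le_dist[of y x0] y by simp
      then have "X \<in> nbhd P \<delta> x0" using X by (auto simp: nbhd_def cball_max_def)
      then show ?thesis using X by blast
    qed
    then obtain h where h: "\<And>k. h k \<in> nbhd P \<delta> x0 \<and> c (h k) = k" by metis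
    have injh: "inj h" by (rule injI) (metis h)
    have "card (range h) = d + 1" using card_image[OF injh] by (simp add: d_def)
    moreover have "range h \<subseteq> nbhd P \<delta> x0" using h by blast
    moreover have fe: "finite (nbhd P e x0)" using fin by blast
    ultimately have "card (nbhd P \<delta> x0) \<ge> d + 1"
      by (metis card_mono finite_subset sub)
    moreover have "card (nbhd P e x0) \<le> d + 1" using fin by (simp add: d_def)
    moreover have "card (nbhd P \<delta> x0) \<le> card (nbhd P e x0)" using card_mono[OF fe sub] .
    ultimately show ?thesis using card_subset_eq[OF fe sub] by simp
  qed
  have cl: "x0 \<in> closure X" if X: "X \<in> nbhd P e x0" for X
    unfolding closure_approachable
  proof (intro allI impI)
    fix \<epsilon> :: real assume \<epsilon>: "\<epsilon> > 0"
    define \<delta> where "\<delta> = min e (\<epsilon> / (2 * real d))"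
    have dl: "0 < \<delta>" "\<delta> \<le> e" using \<epsilon> epos dpos by (auto simp: \<delta>_def)
    have "X \<in> nbhd P \<delta> x0" using nb_eq[OF dl] X by simp
    then obtain y where y: "y \<in> X" "dmax y x0 \<le> \<delta>" by (auto simp: nbhd_def cball_max_def)
    have "dist y x0 \<le> real d * dmax y x0" using dist_le_dmax[of y x0] by (simp add: d_def)
    also have "\<dots> \<le> real d * \<delta>" using y dpos by (simp add: mult_left_mono)
    also have "\<dots> \<le> real d * (\<epsilon> / (2 * real d))" using dpos by (intro mult_left_mono) (auto simp: \<delta>_def)
    also have "\<dots> < \<epsilon>" using dpos \<epsilon> by (simp add: field_simps)
    finally show "\<exists>y\<in>X. dist y x0 < \<epsilon>" using y by blast
  qed
  have cardN: "card (nbhd P e x0) = CARD('n) + 1" using nb_eq[OF epos order_refl] by (simp add: d_def)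
  have "has_clique P (CARD('n) + 1)"
    unfolding has_clique_def
  proof (intro exI[of _ "nbhd P e x0"] conjI ballI)
    show "nbhd P e x0 \<subseteq> P" by (auto simp: nbhd_def)
    show "finite (nbhd P e x0)" using fin by blast
    show "card (nbhd P e x0) = CARD('n) + 1" by (rule cardN)
    fix X Y assume "X \<in> nbhd P e x0" "Y \<in> nbhd P e x0"
    then show "adjacent X Y" using cl unfolding adjacent_def by blast
  qed
  then show ?thesis using cardN by blast
qed

end
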